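(* Let $(X,\mathcal{C},O)$ be a simple compatibility scenario with $O=\{0,1\}$ whose compatibility graph contains at least one cycle, and let $\mathrm{B}=\{p_C\}$ be a nondisturbing behavior for it. Then $\mathrm{B}$ is logically contextual if and only if there exist a cycle $N_1,N_2,\dots,N_m$ ($m\geq 3$) of the compatibility graph, an index $1\leq i\leq m$, $(a,b)\in\{0,1\}^2$ and $(\alpha_1,\dots,\alpha_{m-2})\in\{0,1\}^{m-2}$ such that, writing $q_r(x,y)$ for the probability, under $p_{\{N_r,N_{r+1}\}}$, that $N_r=x$ and $N_{r+1}=y$ (indices modulo $m$), $q_i(a,b)>0$, $q_{i+1}(b,\alpha_1)=0$, $q_{i+j}(\lnot\alpha_{j-1},\alpha_j)=0$ for $2\leq j\leq m-2$, and $q_{i+m-1}(\lnot\alpha_{m-2},a)=0$, where $\lnot x=1-x$.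
   Context: A compatibility scenario is a triple $(X,\mathcal{C},O)$ with $X,O$ finite sets and $\mathcal{C}$ a family of subsets of $X$ (contexts) covering $X$, none properly contained in another. It is simple if every context has at most two elements; its compatibility graph has vertex set $X$ and an edge $\{M,M'\}$ for each two-element context. A cycle is a sequence of distinct vertices $N_1,\dots,N_m$, $m\geq3$, with $\{N_r,N_{r+1}\}\in\mathcal{C}$ for all $r$ (indices mod $m$). For $\Omega\subseteq X$, $O^\Omega$ is the set of functions $\Omega\to O$. A behavior is a family of probability distributions $p_C$ on $O^C$, $C\in\mathcal{C}$; it is nondisturbing if for all $C,C'$ the marginals of $p_C$ and $p_{C'}$ on $C\cap C'$ coincide. Let $\bar p_C(s)=1$ if $p_C(s)>0$, else $0$. The behavior is logically noncontextual if there is $\bar p:O^X\to\{0,1\}$ with $\max\{\bar p(t):t\in O^X, t|_C=s\}=\bar p_C(s)$ for all $C\in\mathcal{C}$, $s\in O^C$; otherwise logically contextual. *)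

theory Defs
  imports Complex_Main "HOL-Library.FuncSet"
begin

text \<open>Assignments \<open>O^\<Omega>\<close> are represented as extensional functions \<open>\<Omega> \<rightarrow>\<^sub>E Out\<close>.\<close>

definition compat_scenario :: "'x set \<Rightarrow> 'x set set \<Rightarrow> 'o set \<Rightarrow> bool" where
  "compat_scenario X Cs Out \<longleftrightarrow> finite X \<and> finite Out \<and> (\<forall>C\<in>Cs. C \<subseteq> X) \<and> \<Union>Cs = X
     \<and> (\<forall>C\<in>Cs. \<forall>C'\<in>Cs. \<not> C \<subset> C')"

definition simple_scenario :: "'x set set \<Rightarrow> bool" where
  "simple_scenario Cs \<longleftrightarrow> (\<forall>C\<in>Cs. card C \<le> 2)"

text \<open>A cycle \<open>N_1,\<dots>,N_m\<close> of the compatibility graph, as a list (0-based indices mod m).\<close>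
definition is_cycle :: "'x set set \<Rightarrow> 'x list \<Rightarrow> bool" where
  "is_cycle Cs N \<longleftrightarrow> length N \<ge> 3 \<and> distinct N \<and>
     (\<forall>r < length N. {N ! r, N ! ((r + 1) mod length N)} \<in> Cs)"

definition behavior :: "'x set set \<Rightarrow> 'o set \<Rightarrow> ('x set \<Rightarrow> ('x \<Rightarrow> 'o) \<Rightarrow> real) \<Rightarrow> bool" where
  "behavior Cs Out p \<longleftrightarrow> (\<forall>C\<in>Cs. (\<forall>s\<in>C \<rightarrow>\<^sub>E Out. p C s \<ge> 0) \<and> (\<Sum>s\<in>C \<rightarrow>\<^sub>E Out. p C s) = 1)"

definition marginal :: "'o set \<Rightarrow> ('x set \<Rightarrow> ('x \<Rightarrow> 'o) \<Rightarrow> real) \<Rightarrow> 'x set \<Rightarrow> 'x set \<Rightarrow> ('x \<Rightarrow> 'o) \<Rightarrow> real" where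
  "marginal Out p C D t = (\<Sum>s\<in>{s \<in> C \<rightarrow>\<^sub>E Out. restrict s D = t}. p C s)"

definition nondisturbing :: "'x set set \<Rightarrow> 'o set \<Rightarrow> ('x set \<Rightarrow> ('x \<Rightarrow> 'o) \<Rightarrow> real) \<Rightarrow> bool" where
  "nondisturbing Cs Out p \<longleftrightarrow> (\<forall>C\<in>Cs. \<forall>C'\<in>Cs. \<forall>t\<in>(C \<inter> C') \<rightarrow>\<^sub>E Out.
      marginal Out p C (C \<inter> C') t = marginal Out p C' (C \<inter> C') t)"

text \<open>Support indicator \<open>\<bar>p_C(s) = 1\<close> iff \<open>p_C(s) > 0\<close>; \<open>\<bar>p\<close> is a 0/1-valued function on \<open>O^X\<close>,
  represented as a predicate, and the max over extensions equals 1 iff some extension has value 1.\<close>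
definition logically_noncontextual ::
  "'x set \<Rightarrow> 'x set set \<Rightarrow> 'o set \<Rightarrow> ('x set \<Rightarrow> ('x \<Rightarrow> 'o) \<Rightarrow> real) \<Rightarrow> bool" where
  "logically_noncontextual X Cs Out p \<longleftrightarrow> (\<exists>pb :: ('x \<Rightarrow> 'o) \<Rightarrow> nat.
      (\<forall>t\<in>X \<rightarrow>\<^sub>E Out. pb t \<in> {0,1}) \<and>
      (\<forall>C\<in>Cs. \<forall>s\<in>C \<rightarrow>\<^sub>E Out.
          Max {pb t | t. t \<in> X \<rightarrow>\<^sub>E Out \<and> restrict t C = s} = (if p C s > 0 then 1 else 0)))"

definition logically_contextual ::
  "'x set \<Rightarrow> 'x set set \<Rightarrow> 'o set \<Rightarrow> ('x set \<Rightarrow> ('x \<Rightarrow> 'o) \<Rightarrow> real) \<Rightarrow> bool" where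
  "logically_contextual X Cs Out p \<longleftrightarrow> \<not> logically_noncontextual X Cs Out p"

text \<open>\<open>q_r(x,y)\<close>: probability under \<open>p_{N_r,N_{r+1}}\<close> that \<open>N_r = x\<close> and \<open>N_{r+1} = y\<close>
  (0-based indices taken mod m).\<close>
definition edge_prob :: "('x set \<Rightarrow> ('x \<Rightarrow> 'o) \<Rightarrow> real) \<Rightarrow> 'x list \<Rightarrow> nat \<Rightarrow> 'o \<Rightarrow> 'o \<Rightarrow> real" where
  "edge_prob p N r x y =
     (let m = length N; u = N ! (r mod m); v = N ! ((r + 1) mod m)
      in p {u, v} ((\<lambda>_. undefined)(u := x, v := y)))"

end

theory Submission
  imports Defs
begin

definition upd2 :: "'x \<Rightarrow> nat \<Rightarrow> 'x \<Rightarrow> nat \<Rightarrow> 'x \<Rightarrow> nat" where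
  "upd2 x a y b = (\<lambda>_. undefined)(x := a, y := b)"

lemma upd2_comm: "x \<noteq> y \<Longrightarrow> upd2 x a y b = upd2 y b x a"
  unfolding upd2_def by (rule ext) auto

lemma upd2_PiE: "a \<le> 1 \<Longrightarrow> b \<le> 1 \<Longrightarrow> upd2 x a y b \<in> {x,y} \<rightarrow>\<^sub>E {0::nat,1}"
  unfolding upd2_def by (auto simp: PiE_iff extensional_def)

lemma restrict_two: "x \<noteq> y \<Longrightarrow> restrict f {x,y} = upd2 x (f x) y (f y)"
  unfolding upd2_def by (rule ext) auto

lemma PiE_two_eq: "x \<noteq> y \<Longrightarrow> s \<in> {x,y} \<rightarrow>\<^sub>E B \<Longrightarrow> s = upd2 x (s x) y (s y)"
  unfolding upd2_def by (rule ext) (auto simp: PiE_iff extensional_def)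

lemma PiE_one_eq: "s \<in> {x} \<rightarrow>\<^sub>E B \<Longrightarrow> s = restrict (\<lambda>_. s x) {x}"
  by (rule ext) (auto simp: PiE_iff extensional_def)

lemma upd2_at1[simp]: "upd2 x a y b x = (if x = y then b else a)"
  and upd2_at2[simp]: "upd2 x a y b y = b"
  unfolding upd2_def by auto

locale sc =
  fixes X :: "'x set" and Cs :: "'x set set" and p :: "'x set \<Rightarrow> ('x \<Rightarrow> nat) \<Rightarrow> real"
  assumes cs: "compat_scenario X Cs {0, 1}"
    and simp_sc: "simple_scenario Cs"
    and cyc: "\<exists>N. is_cycle Cs N"
    and beh: "behavior Cs {0, 1} p"
    and nd: "nondisturbing Cs {0, 1} p"
begin

lemma finX: "finite X" using cs by (simp add: compat_scenario_def)
lemma ctx_sub: "C \<in> Cs \<Longrightarrow> C \<subseteq> X" using cs by (auto simp: compat_scenario_def)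
lemma cover: "x \<in> X \<Longrightarrow> \<exists>C\<in>Cs. x \<in> C" using cs by (auto simp: compat_scenario_def)
lemma antichain: "C \<in> Cs \<Longrightarrow> C' \<in> Cs \<Longrightarrow> \<not> C \<subset> C'" using cs by (auto simp: compat_scenario_def)

lemma nonneg: "C \<in> Cs \<Longrightarrow> s \<in> C \<rightarrow>\<^sub>E {0,1} \<Longrightarrow> p C s \<ge> 0"
  using beh unfolding behavior_def by blast

lemma sum1: "C \<in> Cs \<Longrightarrow> (\<Sum>s\<in>C \<rightarrow>\<^sub>E {0,1}. p C s) = 1"
  using beh unfolding behavior_def by blast

lemma nonneg2: "{x,y} \<in> Cs \<Longrightarrow> a \<le> 1 \<Longrightarrow> b \<le> 1 \<Longrightarrow> p {x,y} (upd2 x a y b) \<ge> 0"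
  by (rule nonneg, assumption, rule upd2_PiE)

lemma no_empty: "{} \<notin> Cs"
proof
  assume e: "{} \<in> Cs"
  obtain N where N: "is_cycle Cs N" using cyc by blast
  then have A: "\<forall>r<length N. {N ! r, N ! (Suc r mod length N)} \<in> Cs" and L: "length N \<ge> 3"
    by (auto simp: is_cycle_def)
  have "{N!0, N!(Suc 0 mod length N)} \<in> Cs" using A[rule_format, of 0] L by (cases N) auto
  then show False using antichain[OF e] by blast
qed

lemma ctx_shape: "C \<in> Cs \<Longrightarrow> (\<exists>x. C = {x}) \<or> (\<exists>x y. x \<noteq> y \<and> C = {x,y})"
proof -
  assume C: "C \<in> Cs"
  have fin: "finite C" using ctx_sub[OF C] finX finite_subset by blast
  have "card C \<le> 2" using simp_sc C by (auto simp: simple_scenario_def)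
  moreover have "C \<noteq> {}" using C no_empty by blast
  ultimately have "card C = 1 \<or> card C = 2" using fin card_0_eq by fastforce
  then show ?thesis by (auto simp: card_1_singleton_iff card_2_iff)
qed

lemma marg_formula:
  assumes "y \<noteq> z" "\<beta> \<le> 1"
  shows "marginal {0,1} p {y,z} {y} ((\<lambda>_. undefined)(y := \<beta>)) = p {y,z} (upd2 y \<beta> z 0) + p {y,z} (upd2 y \<beta> z 1)"
proof -
  have "{s \<in> {y,z} \<rightarrow>\<^sub>E {0,1}. restrict s {y} = (\<lambda>_. undefined)(y := \<beta>)} = {upd2 y \<beta> z 0, upd2 y \<beta> z 1}"
  proof (intro equalityI subsetI)
    fix s assume s: "s \<in> {s \<in> {y,z} \<rightarrow>\<^sub>E {0::nat,1}. restrict s {y} = (\<lambda>_. undefined)(y := \<beta>)}"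
    then have sP: "s \<in> {y,z} \<rightarrow>\<^sub>E {0::nat,1}" and r: "restrict s {y} = (\<lambda>_. undefined)(y := \<beta>)" by auto
    have "s y = \<beta>" using fun_cong[OF r, of y] by simp
    moreover have "s z \<in> {0,1}" using sP by auto
    ultimately show "s \<in> {upd2 y \<beta> z 0, upd2 y \<beta> z 1}"
      using PiE_two_eq[OF assms(1) sP] by auto
  next
    fix s assume "s \<in> {upd2 y \<beta> z 0, upd2 y \<beta> z 1}"
    then show "s \<in> {s \<in> {y,z} \<rightarrow>\<^sub>E {0::nat,1}. restrict s {y} = (\<lambda>_. undefined)(y := \<beta>)}"
      using assms upd2_PiE[of \<beta> 0 y z] upd2_PiE[of \<beta> 1 y z]
      by (auto simp: upd2_def restrict_def)
  qed
  moreover have "upd2 y \<beta> z 0 \<noteq> upd2 y \<beta> z 1"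
  proof
    assume "upd2 y \<beta> z 0 = upd2 y \<beta> z 1"
    from fun_cong[OF this, of z] show False by simp
  qed
  ultimately show ?thesis unfolding marginal_def by simp
qed

lemma edge_marg:
  assumes "{y,z} \<in> Cs" "{y,w} \<in> Cs" "y \<noteq> z" "y \<noteq> w" "\<beta> \<le> 1"
  shows "p {y,z} (upd2 y \<beta> z 0) + p {y,z} (upd2 y \<beta> z 1) = p {y,w} (upd2 y \<beta> w 0) + p {y,w} (upd2 y \<beta> w 1)"
proof (cases "z = w")
  case True then show ?thesis by simp
next
  case False
  then have I: "{y,z} \<inter> {y,w} = {y}" by auto
  have t1: "(\<lambda>_. undefined)(y := \<beta>) \<in> {y} \<rightarrow>\<^sub>E {0::nat,1}"
    using assms(5) by (auto simp: PiE_iff extensional_def)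
  have t: "(\<lambda>_. undefined)(y := \<beta>) \<in> ({y,z} \<inter> {y,w}) \<rightarrow>\<^sub>E {0::nat,1}"
    by (subst I) (rule t1)
  have H: "\<forall>C\<in>Cs. \<forall>C'\<in>Cs. \<forall>t\<in>(C \<inter> C') \<rightarrow>\<^sub>E {0::nat,1}.
      marginal {0,1} p C (C \<inter> C') t = marginal {0,1} p C' (C \<inter> C') t"
    using nd unfolding nondisturbing_def .
  have "marginal {0,1} p {y,z} ({y,z} \<inter> {y,w}) ((\<lambda>_. undefined)(y := \<beta>))
     = marginal {0,1} p {y,w} ({y,z} \<inter> {y,w}) ((\<lambda>_. undefined)(y := \<beta>))"
    by (rule H[rule_format, OF assms(1,2) t])
  then have "marginal {0,1} p {y,z} {y} ((\<lambda>_. undefined)(y := \<beta>))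
     = marginal {0,1} p {y,w} {y} ((\<lambda>_. undefined)(y := \<beta>))" unfolding I .
  then show ?thesis using marg_formula[OF assms(3,5)] marg_formula[OF assms(4,5)] by simp
qed


definition imp :: "('x \<times> nat) \<Rightarrow> ('x \<times> nat) \<Rightarrow> bool" where
  "imp l m \<longleftrightarrow> fst l \<noteq> fst m \<and> {fst l, fst m} \<in> Cs \<and> snd l \<le> 1 \<and> snd m \<le> 1 \<and>
     p {fst l, fst m} (upd2 (fst l) (snd l) (fst m) (1 - snd m)) = 0"

definition neg :: "('x \<times> nat) \<Rightarrow> ('x \<times> nat)" where
  "neg l = (fst l, 1 - snd l)"

definition walk :: "('x \<times> nat) list \<Rightarrow> ('x \<times> nat) \<Rightarrow> ('x \<times> nat) \<Rightarrow> bool" where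
  "walk W l m \<longleftrightarrow> W \<noteq> [] \<and> hd W = l \<and> last W = m \<and> successively imp W"

definition posl :: "('x \<times> nat) \<Rightarrow> bool" where
  "posl l \<longleftrightarrow> (\<forall>z. {fst l, z} \<in> Cs \<and> fst l \<noteq> z \<longrightarrow>
      p {fst l, z} (upd2 (fst l) (snd l) z 0) + p {fst l, z} (upd2 (fst l) (snd l) z 1) > 0)"

lemma imp_contra: "imp l m \<Longrightarrow> imp (neg m) (neg l)"
proof -
  assume h: "imp l m"
  obtain x \<alpha> where l: "l = (x,\<alpha>)" by (cases l)
  obtain y \<beta> where m: "m = (y,\<beta>)" by (cases m)
  from h have "x \<noteq> y" "{x,y} \<in> Cs" "\<alpha> \<le> 1" "\<beta> \<le> 1" "p {x,y} (upd2 x \<alpha> y (1 - \<beta>)) = 0"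
    by (auto simp: imp_def l m)
  moreover have "{y,x} = {x,y}" by auto
  moreover have "1 - (1 - \<alpha>) = \<alpha>" using \<open>\<alpha> \<le> 1\<close> by simp
  ultimately show ?thesis by (simp add: imp_def neg_def l m upd2_comm)
qed

lemma walk_single: "walk [l] l l" by (simp add: walk_def)

lemma walk_snoc: "walk W l m \<Longrightarrow> imp m m' \<Longrightarrow> walk (W @ [m']) l m'"
  by (auto simp: walk_def successively_append_iff)

lemma walk_app: "walk W1 a b \<Longrightarrow> walk W2 b c \<Longrightarrow> walk (W1 @ tl W2) a c"
proof -
  assume w1: "walk W1 a b" and w2: "walk W2 b c"
  obtain z Z where W2: "W2 = z # Z" using w2 by (cases W2) (auto simp: walk_def)
  show ?thesis
  proof (cases "Z = []")
    case True then show ?thesis using w1 w2 W2 by (auto simp: walk_def)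
  next
    case False
    from w2 W2 have "z = b" "successively imp (z # Z)" "last Z = c" using False by (auto simp: walk_def)
    then show ?thesis using w1 W2 False
      by (auto simp: walk_def successively_append_iff successively_Cons)
  qed
qed

lemma walk_rev: "walk W l m \<Longrightarrow> walk (rev (map neg W)) (neg m) (neg l)"
proof -
  assume w: "walk W l m"
  then have "successively imp W" by (simp add: walk_def)
  then have "successively (\<lambda>x y. imp (neg y) (neg x)) W"
    by (rule successively_mono) (rule imp_contra)
  then have "successively imp (rev (map neg W))" by (simp add: successively_map)
  then show ?thesis using w by (auto simp: walk_def hd_rev last_rev hd_map last_map)
qed

lemma walk_vals: "walk W l m \<Longrightarrow> snd l \<le> 1 \<Longrightarrow> k < length W \<Longrightarrow> snd (W!k) \<le> 1"
proof -
  assume w: "walk W l m" and l: "snd l \<le> 1" and k: "k < length W"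
  show ?thesis
  proof (cases "Suc k < length W")
    case True
    then have "imp (W!k) (W!Suc k)" using w successively_nth by (auto simp: walk_def)
    then show ?thesis by (simp add: imp_def)
  next
    case False
    show ?thesis
    proof (cases k)
      case 0 then show ?thesis using w l by (auto simp: walk_def hd_conv_nth)
    next
      case (Suc k')
      then have "imp (W!k') (W!Suc k')" using w k successively_nth by (auto simp: walk_def)
      then show ?thesis using Suc by (simp add: imp_def)
    qed
  qed
qed

lemma walk_last_cases: "walk W l m \<Longrightarrow> m = l \<or> (\<exists>z. imp z m)"
proof -
  assume w: "walk W l m"
  show ?thesis
  proof (cases "length W = 1")
    case True then show ?thesis using w by (cases W) (auto simp: walk_def)
  next
    case False
    then have "Suc (length W - 2) < length W" "Suc (length W - 2) = length W - 1" using w by (cases W; auto simp: walk_def)+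
    then have "imp (W!(length W - 2)) (W!(length W - 1))" using w successively_nth by (metis walk_def)
    moreover have "W!(length W - 1) = m" using w by (auto simp: walk_def last_conv_nth)
    ultimately show ?thesis by metis
  qed
qed

lemma posl_step:
  assumes "posl l" "imp l m"
  shows "p {fst l, fst m} (upd2 (fst l) (snd l) (fst m) (snd m)) > 0 \<and> posl m"
proof -
  obtain x \<alpha> where l: "l = (x,\<alpha>)" by (cases l)
  obtain y \<beta> where m: "m = (y,\<beta>)" by (cases m)
  from assms(2) have xy: "x \<noteq> y" "{x,y} \<in> Cs" "\<alpha> \<le> 1" "\<beta> \<le> 1" and z: "p {x,y} (upd2 x \<alpha> y (1 - \<beta>)) = 0"
    by (auto simp: imp_def l m)
  from assms(1) xy have s: "p {x,y} (upd2 x \<alpha> y 0) + p {x,y} (upd2 x \<alpha> y 1) > 0"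
    by (auto simp: posl_def l)
  have pos: "p {x,y} (upd2 x \<alpha> y \<beta>) > 0"
  proof (cases "\<beta> = 0")
    case True then show ?thesis using s z by simp
  next
    case False then have "\<beta> = 1" using xy by simp
    then show ?thesis using s z by simp
  qed
  have "posl (y,\<beta>)"
    unfolding posl_def
  proof (intro allI impI)
    fix w assume w: "{fst (y,\<beta>), w} \<in> Cs \<and> fst (y,\<beta>) \<noteq> w"
    have yx: "{y,x} \<in> Cs" "y \<noteq> x" using xy by (auto simp: insert_commute)
    have e: "p {y,w} (upd2 y \<beta> w 0) + p {y,w} (upd2 y \<beta> w 1) = p {y,x} (upd2 y \<beta> x 0) + p {y,x} (upd2 y \<beta> x 1)"
      using edge_marg[of y w x \<beta>] w yx xy by auto
    have n0: "p {y,x} (upd2 y \<beta> x 0) \<ge> 0" "p {y,x} (upd2 y \<beta> x 1) \<ge> 0"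
      using nonneg2[OF yx(1)] xy by auto
    have "p {y,x} (upd2 y \<beta> x \<alpha>) > 0" using pos yx by (simp add: upd2_comm insert_commute)
    then have "p {y,x} (upd2 y \<beta> x 0) + p {y,x} (upd2 y \<beta> x 1) > 0"
      using n0 xy(3) by (cases "\<alpha> = 0") (auto simp: le_Suc_eq)
    then show "p {fst (y,\<beta>), w} (upd2 (fst (y,\<beta>)) (snd (y,\<beta>)) w 0) + p {fst (y,\<beta>), w} (upd2 (fst (y,\<beta>)) (snd (y,\<beta>)) w 1) > 0"
      using e by simp
  qed
  then show ?thesis using pos l m by simp
qed

lemma posl_pair1:
  assumes "{u,v} \<in> Cs" "u \<noteq> v" "a \<le> 1" "b \<le> 1" "p {u,v} (upd2 u a v b) > 0"
  shows "posl (u,a)"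
  unfolding posl_def
proof (intro allI impI)
  fix w assume w: "{fst (u,a), w} \<in> Cs \<and> fst (u,a) \<noteq> w"
  have e: "p {u,w} (upd2 u a w 0) + p {u,w} (upd2 u a w 1) = p {u,v} (upd2 u a v 0) + p {u,v} (upd2 u a v 1)"
    using edge_marg[of u w v a] w assms by auto
  have n0: "p {u,v} (upd2 u a v 0) \<ge> 0" "p {u,v} (upd2 u a v 1) \<ge> 0"
    using nonneg2[OF assms(1)] assms by auto
  have "p {u,v} (upd2 u a v 0) + p {u,v} (upd2 u a v 1) > 0"
    using n0 assms(4,5) by (cases "b = 0") (auto simp: le_Suc_eq)
  then show "p {fst (u,a), w} (upd2 (fst (u,a)) (snd (u,a)) w 0) + p {fst (u,a), w} (upd2 (fst (u,a)) (snd (u,a)) w 1) > 0"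
    using e by simp
qed

lemma posl_pair2:
  assumes "{u,v} \<in> Cs" "u \<noteq> v" "a \<le> 1" "b \<le> 1" "p {u,v} (upd2 u a v b) > 0"
  shows "posl (v,b)"
  using posl_pair1[of v u b a] assms by (simp add: insert_commute upd2_comm)

lemma walk_posl: "walk W l m \<Longrightarrow> posl l \<Longrightarrow> k < length W \<Longrightarrow> posl (W!k)"
proof (induction k)
  case 0 then show ?case by (auto simp: walk_def hd_conv_nth)
next
  case (Suc k)
  then have "posl (W!k)" by simp
  moreover have "imp (W!k) (W!Suc k)" using Suc.prems successively_nth by (auto simp: walk_def)
  ultimately show ?case using posl_step by blast
qed


definition witness :: "('x \<times> nat) list \<Rightarrow> bool" where
  "witness L \<longleftrightarrow> length L \<ge> 3 \<and> distinct (map fst L) \<and> {fst (L!0), fst (L!1)} \<in> Cs \<and>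
     snd (L!0) \<le> 1 \<and> snd (L!1) \<le> 1 \<and>
     p {fst (L!0), fst (L!1)} (upd2 (fst (L!0)) (snd (L!0)) (fst (L!1)) (snd (L!1))) > 0 \<and>
     (\<forall>j. 1 \<le> j \<and> Suc j < length L \<longrightarrow> imp (L!j) (L!Suc j)) \<and>
     imp (L!(length L - 1)) (neg (L!0))"

lemma succ_take: "successively P xs \<Longrightarrow> successively P (take n xs)"
  using successively_append_iff[of P "take n xs" "drop n xs"] by simp

lemma succ_drop: "successively P xs \<Longrightarrow> successively P (drop n xs)"
  using successively_append_iff[of P "take n xs" "drop n xs"] by simp

lemma not_distinct_nth: "\<not> distinct xs \<Longrightarrow> \<exists>i j. i < j \<and> j < length xs \<and> xs!i = xs!j"
  by (metis distinct_conv_nth linorder_neq_iff)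

lemma bad_witness:
  assumes "u \<noteq> v" "{u,v} \<in> Cs" "a \<le> 1" "b \<le> 1" "p {u,v} (upd2 u a v b) > 0"
    "walk W (v,b) (u,1-a)"
  shows "\<exists>L. witness L"
  using assms
proof (induction "length W" arbitrary: u a v b W rule: less_induct)
  case less
  have w: "walk W (v,b) (u,1-a)" by fact
  then have Wne: "W \<noteq> []" and hdW: "hd W = (v,b)" and lastW: "last W = (u,1-a)"
    and suc: "successively imp W" by (auto simp: walk_def)
  have len2: "length W \<ge> 2"
  proof (rule ccontr)
    assume a2: "\<not> length W \<ge> 2"
    have "length W \<noteq> 0" using Wne by simp
    with a2 have "length W = 1" by linarith
    then obtain x where "W = [x]" by (cases W) auto
    then show False using hdW lastW less.prems(1) by simp
  qed
  show ?case
  proof (cases "distinct (map fst W)")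
    case True
    define L where "L = (u,a) # butlast W"
    have lenL: "length L = length W" using Wne by (simp add: L_def)
    have Lnth: "L!j = W!(j-1)" if "1 \<le> j" "j < length L" for j
      using that by (cases j) (auto simp: L_def nth_butlast lenL)
    have L0: "L!0 = (u,a)" by (simp add: L_def)
    have W0: "W!0 = (v,b)" using hdW Wne by (simp add: hd_conv_nth)
    have Wl: "W!(length W - 1) = (u,1-a)" using lastW Wne by (simp add: last_conv_nth)
    have L1: "L!1 = (v,b)" using Lnth[of 1] lenL len2 W0 by simp
    have len3: "length W \<ge> 3"
    proof (rule ccontr)
      assume "\<not> length W \<ge> 3"
      then have l2: "length W = 2" using len2 by simp
      have "imp (W!0) (W!1)" using successively_nth[OF suc, of 0] l2 by simp
      moreover have "W!1 = (u,1-a)" using Wl l2 by simp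
      ultimately have "p {v,u} (upd2 v b u (1 - (1 - a))) = 0" using W0 by (simp add: imp_def)
      moreover have "1 - (1 - a) = a" using less.prems(3) by simp
      ultimately have "p {u,v} (upd2 u a v b) = 0" using less.prems(1) by (simp add: insert_commute upd2_comm)
      then show False using less.prems(5) by simp
    qed
    have dist: "distinct (map fst L)"
    proof -
      have "map fst (butlast W @ [last W]) = map fst W" using append_butlast_last_id[OF Wne] by simp
      then have "map fst W = map fst (butlast W) @ [u]" using lastW by simp
      then show ?thesis using True by (simp add: L_def)
    qed
    have steps: "\<forall>j. 1 \<le> j \<and> Suc j < length L \<longrightarrow> imp (L!j) (L!Suc j)"
    proof (intro allI impI)
      fix j assume j: "1 \<le> j \<and> Suc j < length L"
      then have "L!j = W!(j-1)" "L!Suc j = W!j" using Lnth[of j] Lnth[of "Suc j"] by auto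
      moreover have "imp (W!(j-1)) (W!Suc (j-1))" using successively_nth[OF suc, of "j-1"] j lenL by simp
      ultimately show "imp (L!j) (L!Suc j)" using j by simp
    qed
    have lastimp: "imp (L!(length L - 1)) (neg (L!0))"
    proof -
      have "L!(length L - 1) = W!(length W - 2)" using Lnth[of "length L - 1"] lenL len3 by (simp add: numeral_2_eq_2)
      moreover have "imp (W!(length W - 2)) (W!Suc (length W - 2))" using successively_nth[OF suc, of "length W - 2"] len3 by simp
      moreover have "Suc (length W - 2) = length W - 1" using len3 by simp
      moreover have "neg (L!0) = (u, 1-a)" by (simp add: L0 neg_def)
      ultimately show ?thesis using Wl by simp
    qed
    have "witness L" unfolding witness_def
      using lenL len3 dist L0 L1 less.prems steps lastimp by simp
    then show ?thesis by blast
  next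
    case False
    then obtain j j' where jj: "j < j'" "j' < length W" and eqf: "fst (W!j) = fst (W!j')"
      using not_distinct_nth[OF False] by auto
    have Wl: "W!(length W - 1) = (u,1-a)" using lastW Wne by (simp add: last_conv_nth)
    have vals: "snd (W!k) \<le> 1" if "k < length W" for k
      using walk_vals[OF w _ that] less.prems(4) by simp
    show ?thesis
    proof (cases "snd (W!j) = snd (W!j')")
      case True
      then have eqW: "W!j = W!j'" using eqf by (simp add: prod_eq_iff)
      define W' where "W' = take (Suc j) W @ drop (Suc j') W"
      have t1: "take (Suc j) W = take j W @ [W!j]" using jj by (simp add: take_Suc_conv_app_nth)
      have t2: "take (Suc j') W = take j' W @ [W!j']" using jj by (simp add: take_Suc_conv_app_nth)
      have s1: "successively imp (take (Suc j) W)" using succ_take[OF suc] .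
      have s2: "successively imp (drop (Suc j') W)" using succ_drop[OF suc] .
      have s3: "drop (Suc j') W = [] \<or> imp (W!j') (hd (drop (Suc j') W))"
      proof (cases "Suc j' < length W")
        case True
        then have "hd (drop (Suc j') W) = W!Suc j'" by (simp add: hd_drop_conv_nth)
        then show ?thesis using successively_nth[OF suc True] by simp
      qed simp
      have sW': "successively imp W'"
        unfolding W'_def successively_append_iff using s1 s2 s3 t1 eqW by auto
      have hdW': "hd W' = (v,b)" using hdW Wne by (simp add: W'_def t1 hd_append) (cases j; simp add: hd_conv_nth)
      have lastW': "last W' = (u,1-a)"
      proof (cases "drop (Suc j') W = []")
        case True
        then have "j' = length W - 1" using jj by simp
        then show ?thesis using True Wl eqW by (simp add: W'_def t1)
      next
        case False
        then show ?thesis using lastW by (simp add: W'_def)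
      qed
      have "walk W' (v,b) (u,1-a)" using sW' hdW' lastW' Wne by (simp add: walk_def W'_def)
      moreover have "length W' < length W" using jj by (simp add: W'_def)
      ultimately show ?thesis using less.hyps[OF _ less.prems(1-5)] by blast
    next
      case False
      obtain y \<gamma> where Wj: "W!j = (y,\<gamma>)" by (cases "W!j")
      have "snd (W!j') = 1 - \<gamma>" using False vals[of j] vals[of j'] jj Wj by simp
      then have Wj': "W!j' = (y, 1-\<gamma>)" using eqf Wj by (simp add: prod_eq_iff)
      obtain v' b' where Wsj: "W!Suc j = (v',b')" by (cases "W!Suc j")
      define W'' where "W'' = drop (Suc j) (take (Suc j') W)"
      have t2: "take (Suc j') W = take j' W @ [W!j']" using jj by (simp add: take_Suc_conv_app_nth)
      have sW'': "successively imp W''" unfolding W''_def by (rule succ_drop[OF succ_take[OF suc]])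
      have hdW'': "hd W'' = (v',b')" using jj Wsj by (simp add: W''_def hd_drop_conv_nth)
      have lastW'': "last W'' = (y, 1-\<gamma>)" using jj Wj' by (simp add: W''_def t2)
      have neW'': "W'' \<noteq> []" using jj by (simp add: W''_def)
      have lenW'': "length W'' < length W" using jj by (simp add: W''_def)
      have pv: "posl (v,b)" using posl_pair2 less.prems by blast
      have pj: "posl (W!j)" using walk_posl[OF w pv] jj by simp
      have ij: "imp (W!j) (W!Suc j)" using successively_nth[OF suc, of j] jj by simp
      then have props: "y \<noteq> v'" "{y,v'} \<in> Cs" "\<gamma> \<le> 1" "b' \<le> 1" using Wj Wsj by (auto simp: imp_def)
      have "p {y,v'} (upd2 y \<gamma> v' b') > 0" using posl_step[OF pj ij] Wj Wsj by simp
      moreover have "walk W'' (v',b') (y, 1-\<gamma>)" using sW'' hdW'' lastW'' neW'' by (simp add: walk_def)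
      ultimately show ?thesis using less.hyps[OF lenW'' props(1,2,3,4)] by blast
    qed
  qed
qed


lemma edge_prob_eq: "edge_prob p N r x y = p {N!(r mod length N), N!(Suc r mod length N)}
   (upd2 (N!(r mod length N)) x (N!(Suc r mod length N)) y)"
  by (simp add: edge_prob_def upd2_def Let_def)

lemma witness_rhs:
  assumes "witness L"
  shows "\<exists>N i a b \<alpha>. is_cycle Cs N \<and> i < length N \<and> a \<in> {0, 1} \<and> b \<in> {0, 1} \<and>
       (\<forall>j\<in>{1..length N - 2}. \<alpha> j \<in> {0, 1}) \<and>
       edge_prob p N i a b > 0 \<and>
       edge_prob p N (i + 1) b (\<alpha> 1) = 0 \<and>
       (\<forall>j\<in>{2..length N - 2}. edge_prob p N (i + j) (1 - \<alpha> (j - 1)) (\<alpha> j) = 0) \<and>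
       edge_prob p N (i + length N - 1) (1 - \<alpha> (length N - 2)) a = 0"
proof -
  define m where "m = length L"
  define N where "N = map fst L"
  define \<alpha> where "\<alpha> = (\<lambda>j. 1 - snd (L!Suc j))"
  have m3: "m \<ge> 3" and dist: "distinct N" and e01: "{fst (L!0), fst (L!1)} \<in> Cs"
    and v0: "snd (L!0) \<le> 1" and v1: "snd (L!1) \<le> 1"
    and pos: "p {fst (L!0), fst (L!1)} (upd2 (fst (L!0)) (snd (L!0)) (fst (L!1)) (snd (L!1))) > 0"
    and steps: "\<And>j. 1 \<le> j \<Longrightarrow> Suc j < m \<Longrightarrow> imp (L!j) (L!Suc j)"
    and lst: "imp (L!(m - 1)) (neg (L!0))"
    using assms by (auto simp: witness_def m_def N_def)
  have lenN: "length N = m" by (simp add: N_def m_def)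
  have Nn: "\<And>k. k < m \<Longrightarrow> N!k = fst (L!k)" by (simp add: N_def m_def)
  have vals: "snd (L!k) \<le> 1" if "k < m" for k
  proof (cases "k \<le> 1")
    case True then show ?thesis using v0 v1 by (cases k) auto
  next
    case False
    then have "imp (L!(k-1)) (L!Suc (k-1))" using steps[of "k-1"] that by simp
    then show ?thesis using False by (simp add: imp_def)
  qed
  have stepsN: "p {N!j, N!Suc j} (upd2 (N!j) (snd (L!j)) (N!Suc j) (1 - snd (L!Suc j))) = 0 \<and> {N!j, N!Suc j} \<in> Cs"
    if "1 \<le> j" "Suc j < m" for j
    using steps[OF that] that Nn[of j] Nn[of "Suc j"] by (simp add: imp_def)
  have lstN: "p {N!(m-1), N!0} (upd2 (N!(m-1)) (snd (L!(m-1))) (N!0) (snd (L!0))) = 0 \<and> {N!(m-1), N!0} \<in> Cs"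
  proof -
    have "1 - (1 - snd (L!0)) = snd (L!0)" using v0 by simp
    then show ?thesis using lst m3 Nn[of "m-1"] Nn[of 0] by (simp add: imp_def neg_def)
  qed
  have cyc: "is_cycle Cs N"
    unfolding is_cycle_def
  proof (intro conjI allI impI)
    show "3 \<le> length N" using m3 lenN by simp
    show "distinct N" by fact
    fix r assume r: "r < length N"
    show "{N ! r, N ! ((r + 1) mod length N)} \<in> Cs"
    proof (cases "r = 0")
      case True then show ?thesis using e01 m3 lenN Nn[of 0] Nn[of 1] by simp
    next
      case False
      show ?thesis
      proof (cases "Suc r < m")
        case True then show ?thesis using stepsN[of r] False lenN by simp
      next
        case False
        then have "Suc r = m" using r lenN by simp
        then have "r = m - 1" "Suc r mod m = 0" by auto
        then show ?thesis using lstN lenN by simp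
      qed
    qed
  qed
  have m1: "Suc 0 mod m = 1" "Suc 1 mod m = 2" using m3 by auto
  have E0: "edge_prob p N 0 (snd (L!0)) (snd (L!1)) > 0"
    using pos m1 lenN Nn[of 0] Nn[of 1] m3 by (simp add: edge_prob_eq)
  have E1: "edge_prob p N (0 + 1) (snd (L!1)) (\<alpha> 1) = 0"
    using stepsN[of 1] m1 lenN m3 by (simp add: edge_prob_eq \<alpha>_def numeral_2_eq_2)
  have E2: "\<forall>j\<in>{2..length N - 2}. edge_prob p N (0 + j) (1 - \<alpha> (j - 1)) (\<alpha> j) = 0"
  proof
    fix j assume j: "j \<in> {2..length N - 2}"
    then have j1: "1 \<le> j" "Suc j < m" using lenN m3 by auto
    have "1 - \<alpha> (j - 1) = snd (L!j)" using j1 vals[of j] by (simp add: \<alpha>_def)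
    moreover have "j mod m = j" "Suc j mod m = Suc j" using j1 by auto
    ultimately show "edge_prob p N (0 + j) (1 - \<alpha> (j - 1)) (\<alpha> j) = 0"
      using stepsN[OF j1] lenN by (simp add: edge_prob_eq \<alpha>_def)
  qed
  have E3: "edge_prob p N (0 + length N - 1) (1 - \<alpha> (length N - 2)) (snd (L!0)) = 0"
  proof -
    have "Suc (m - 2) = m - 1" using m3 by simp
    then have "1 - \<alpha> (m - 2) = snd (L!(m-1))" using vals[of "m-1"] m3 by (simp add: \<alpha>_def)
    moreover have "(m - 1) mod m = m - 1" "Suc (m - 1) mod m = 0" using m3 by auto
    ultimately show ?thesis using lstN lenN by (simp add: edge_prob_eq)
  qed
  have "0 < length N" using lenN m3 by simp
  moreover have "snd (L!0) \<in> {0,1}" "snd (L!1) \<in> {0,1}" using v0 v1 by auto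
  moreover have "\<forall>j\<in>{1..length N - 2}. \<alpha> j \<in> {0, 1}" by (auto simp: \<alpha>_def)
  ultimately show ?thesis using cyc E0 E1 E2 E3 by blast
qed


definition good :: "'x set \<Rightarrow> ('x \<Rightarrow> nat) \<Rightarrow> bool" where
  "good V A \<longleftrightarrow> V \<subseteq> X \<and> (\<forall>x\<in>V. A x \<le> 1) \<and> (\<forall>C\<in>Cs. C \<subseteq> V \<longrightarrow> p C (restrict A C) > 0) \<and>
     (\<forall>x y c. {x,y} \<in> Cs \<longrightarrow> x \<noteq> y \<longrightarrow> x \<in> V \<longrightarrow> y \<notin> V \<longrightarrow> c \<le> 1 \<longrightarrow> p {x,y} (upd2 x (A x) y c) > 0)"

lemma walk_last_val: "walk W l m \<Longrightarrow> snd l \<le> 1 \<Longrightarrow> snd m \<le> 1"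
proof -
  assume w: "walk W l m" and l: "snd l \<le> 1"
  then have "snd (W!(length W - 1)) \<le> 1" using walk_vals[OF w l, of "length W - 1"] by (auto simp: walk_def)
  then show ?thesis using w by (auto simp: walk_def last_conv_nth)
qed

lemma first_step:
  assumes "walk W l m" "l \<noteq> m"
  shows "length W \<ge> 2 \<and> imp l (W!1) \<and> walk (tl W) (W!1) m"
proof -
  obtain z Z where W: "W = z # Z" using assms(1) by (cases W) (auto simp: walk_def)
  have "Z \<noteq> []" using assms W by (auto simp: walk_def)
  then show ?thesis using assms W by (cases Z) (auto simp: walk_def successively_Cons)
qed

lemma self_walk:
  assumes "posl (u,a)" "a \<le> 1" "walk W (u,a) (u,1-a)"
  shows "\<exists>L. witness L"
proof -
  have "a \<noteq> 1 - a" by arith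
  then have ne: "(u,a) \<noteq> (u,1-a)" by simp
  obtain v' b' where W1: "W!1 = (v',b')" by (cases "W!1")
  have fs: "imp (u,a) (v',b')" "walk (tl W) (v',b') (u,1-a)" using first_step[OF assms(3) ne] W1 by auto
  then have props: "u \<noteq> v'" "{u,v'} \<in> Cs" "b' \<le> 1" by (auto simp: imp_def)
  have "p {u,v'} (upd2 u a v' b') > 0" using posl_step[OF assms(1) fs(1)] by simp
  then show ?thesis using bad_witness[OF props(1,2) assms(2) props(3) _ fs(2)] by blast
qed

lemma extend:
  assumes gd: "good V A" and Sne: "S \<noteq> {}"
    and Sok: "\<forall>s\<in>S. snd s \<le> 1 \<and> fst s \<in> X \<and> fst s \<notin> V"
    and nowalk: "\<forall>s1\<in>S. \<forall>s2\<in>S. \<forall>W. \<not> walk W s1 (neg s2)"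
    and sing: "\<forall>s\<in>S. {fst s} \<in> Cs \<longrightarrow> p {fst s} (restrict (\<lambda>_. snd s) {fst s}) > 0"
  shows "\<exists>V' A'. good V' A' \<and> V \<subset> V' \<and> (\<forall>x\<in>V. A' x = A x) \<and> (\<forall>s\<in>S. fst s \<in> V' \<and> A' (fst s) = snd s)"
proof -
  define Cl where "Cl = {l. \<exists>s\<in>S. \<exists>W. walk W s l}"
  have SCl: "S \<subseteq> Cl" unfolding Cl_def using walk_single by blast
  have Cl_val: "snd l \<le> 1" if "l \<in> Cl" for l
    using that Sok walk_last_val unfolding Cl_def by blast
  have Cl_step: "m \<in> Cl" if "l \<in> Cl" "imp l m" for l m
    using that walk_snoc unfolding Cl_def by blast
  have Cl_X: "fst l \<in> X" if "l \<in> Cl" for l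
  proof -
    from that obtain s W where s: "s \<in> S" "walk W s l" unfolding Cl_def by blast
    from walk_last_cases[OF s(2)] show ?thesis
    proof
      assume "l = s" then show ?thesis using Sok s by auto
    next
      assume "\<exists>z. imp z l"
      then obtain z where "{fst z, fst l} \<in> Cs" by (auto simp: imp_def)
      then show ?thesis using ctx_sub by blast
    qed
  qed
  have Cl_uniq: "c = c'" if "(x,c) \<in> Cl" "(x,c') \<in> Cl" for x c c'
  proof (rule ccontr)
    assume ne: "c \<noteq> c'"
    have c1: "c \<le> 1" "c' \<le> 1" using Cl_val that by force+
    then have c': "c' = 1 - c" using ne by auto
    from that obtain s1 W1 where s1: "s1 \<in> S" "walk W1 s1 (x,c)" unfolding Cl_def by blast
    from that obtain s2 W2 where s2: "s2 \<in> S" "walk W2 s2 (x,1-c)" using c' unfolding Cl_def by blast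
    have "walk (rev (map neg W2)) (neg (x,1-c)) (neg s2)" using walk_rev[OF s2(2)] .
    moreover have "neg (x,1-c) = (x,c)" using c1 by (simp add: neg_def)
    ultimately have "walk (W1 @ tl (rev (map neg W2))) s1 (neg s2)" using walk_app[OF s1(2)] by simp
    then show False using nowalk s1(1) s2(1) by blast
  qed
  define A' where "A' = (\<lambda>x. if x \<in> V then A x else if (\<exists>c. (x,c) \<in> Cl) then (SOME c. (x,c) \<in> Cl) else A x)"
  define V' where "V' = V \<union> fst ` Cl"
  have A'V: "A' x = A x" if "x \<in> V" for x using that by (simp add: A'_def)
  have A'Cl: "A' x = c" if "x \<notin> V" "(x,c) \<in> Cl" for x c
  proof -
    have "(x, SOME c. (x,c) \<in> Cl) \<in> Cl" using that(2) by (rule someI)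
    then show ?thesis using that Cl_uniq by (auto simp: A'_def)
  qed
  have A'Cl2: "(x, A' x) \<in> Cl" if "x \<notin> V" "x \<in> V'" for x
  proof -
    from that obtain c where "(x,c) \<in> Cl" unfolding V'_def by force
    then show ?thesis using A'Cl that by auto
  qed
  have gV: "V \<subseteq> X" "\<forall>x\<in>V. A x \<le> 1" "\<forall>C\<in>Cs. C \<subseteq> V \<longrightarrow> p C (restrict A C) > 0"
    "\<And>x y c. {x,y} \<in> Cs \<Longrightarrow> x \<noteq> y \<Longrightarrow> x \<in> V \<Longrightarrow> y \<notin> V \<Longrightarrow> c \<le> 1 \<Longrightarrow> p {x,y} (upd2 x (A x) y c) > 0"
    using gd unfolding good_def by blast+
  have V'X: "V' \<subseteq> X" using gV(1) Cl_X unfolding V'_def by blast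
  have A'val: "A' x \<le> 1" if "x \<in> V'" for x
  proof (cases "x \<in> V")
    case True then show ?thesis using gV(2) A'V by simp
  next
    case False then show ?thesis using A'Cl2[OF False that] Cl_val by force
  qed
  have pair_ok: "p {x,y} (upd2 x (A' x) y (A' y)) > 0"
    if xy: "{x,y} \<in> Cs" "x \<noteq> y" "x \<in> V'" "y \<in> V'" for x y
  proof -
    have yx: "{y,x} \<in> Cs" using xy(1) by (simp add: insert_commute)
    show ?thesis
    proof (cases "x \<in> V")
      case xV: True
      show ?thesis
      proof (cases "y \<in> V")
        case True
        then have "p {x,y} (restrict A {x,y}) > 0" using gV(3) xy xV by auto
        then show ?thesis using restrict_two[OF xy(2)] A'V xV True by simp
      next
        case False
        then show ?thesis using gV(4)[OF xy(1,2) xV False, of "A' y"] A'val[OF xy(4)] A'V[OF xV] by simp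
      qed
    next
      case xV: False
      show ?thesis
      proof (cases "y \<in> V")
        case True
        have "p {y,x} (upd2 y (A y) x (A' x)) > 0"
          using gV(4)[OF yx _ True xV, of "A' x"] A'val[OF xy(3)] xy(2) by auto
        then show ?thesis using A'V[OF True] xy(2) by (simp add: insert_commute upd2_comm)
      next
        case yV: False
        have cx: "(x, A' x) \<in> Cl" and cy: "(y, A' y) \<in> Cl" using A'Cl2 xV yV xy by auto
        have vy: "A' y \<le> 1" "A' x \<le> 1" using A'val xy by auto
        have nn: "p {x,y} (upd2 x (A' x) y (A' y)) \<ge> 0" using nonneg2[OF xy(1)] vy by simp
        show ?thesis
        proof (rule ccontr)
          assume "\<not> ?thesis"
          then have z: "p {x,y} (upd2 x (A' x) y (A' y)) = 0" using nn by simp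
          have "1 - (1 - A' y) = A' y" using vy by simp
          then have "imp (x, A' x) (y, 1 - A' y)" using z xy vy by (simp add: imp_def)
          then have "(y, 1 - A' y) \<in> Cl" using Cl_step cx by blast
          then have "1 - A' y = A' y" using Cl_uniq cy by blast
          then show False by arith
        qed
      qed
    qed
  qed
  have G1: "\<forall>C\<in>Cs. C \<subseteq> V' \<longrightarrow> p C (restrict A' C) > 0"
  proof (intro ballI impI)
    fix C assume C: "C \<in> Cs" "C \<subseteq> V'"
    from ctx_shape[OF C(1)] show "p C (restrict A' C) > 0"
    proof
      assume "\<exists>x. C = {x}"
      then obtain x where Cx: "C = {x}" by blast
      show ?thesis
      proof (cases "x \<in> V")
        case True
        have "restrict A' C = restrict A C" using Cx A'V[OF True] by (auto simp: restrict_def)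
        then show ?thesis using gV(3) C Cx True by auto
      next
        case False
        have xV': "x \<in> V'" using C Cx by auto
        have cl: "(x, A' x) \<in> Cl" using A'Cl2[OF False xV'] .
        then obtain s W where s: "s \<in> S" "walk W s (x, A' x)" unfolding Cl_def by blast
        from walk_last_cases[OF s(2)] have "(x, A' x) = s"
        proof
          assume "\<exists>z. imp z (x, A' x)"
          then obtain z where "{fst z, x} \<in> Cs" "fst z \<noteq> x" by (auto simp: imp_def)
          then have "{x} \<subset> {fst z, x}" by auto
          then show ?thesis using antichain C(1) Cx \<open>{fst z, x} \<in> Cs\<close> by blast
        qed simp
        then have "p {x} (restrict (\<lambda>_. A' x) {x}) > 0" using sing s(1) C Cx by force
        moreover have "restrict (\<lambda>_. A' x) {x} = restrict A' {x}" by (auto simp: restrict_def)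
        ultimately show ?thesis using Cx by simp
      qed
    next
      assume "\<exists>x y. x \<noteq> y \<and> C = {x,y}"
      then obtain x y where Cxy: "x \<noteq> y" "C = {x,y}" by blast
      then show ?thesis using pair_ok[of x y] C restrict_two[OF Cxy(1), of A'] by auto
    qed
  qed
  have G2: "\<forall>x y c. {x,y} \<in> Cs \<longrightarrow> x \<noteq> y \<longrightarrow> x \<in> V' \<longrightarrow> y \<notin> V' \<longrightarrow> c \<le> 1 \<longrightarrow> p {x,y} (upd2 x (A' x) y c) > 0"
  proof (intro allI impI)
    fix x y c assume h: "{x,y} \<in> Cs" "x \<noteq> y" "x \<in> V'" "y \<notin> V'" "c \<le> (1::nat)"
    have yV: "y \<notin> V" using h(4) unfolding V'_def by blast
    show "p {x,y} (upd2 x (A' x) y c) > 0"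
    proof (cases "x \<in> V")
      case True then show ?thesis using gV(4)[OF h(1,2) True yV h(5)] A'V[OF True] by simp
    next
      case False
      have cx: "(x, A' x) \<in> Cl" using A'Cl2[OF False h(3)] .
      have vx: "A' x \<le> 1" using A'val h(3) by simp
      have nn: "p {x,y} (upd2 x (A' x) y c) \<ge> 0" using nonneg2[OF h(1) vx h(5)] .
      show ?thesis
      proof (rule ccontr)
        assume "\<not> ?thesis"
        then have z: "p {x,y} (upd2 x (A' x) y c) = 0" using nn by simp
        have "1 - (1 - c) = c" using h(5) by simp
        then have "imp (x, A' x) (y, 1 - c)" using z h vx by (simp add: imp_def)
        then have "(y, 1 - c) \<in> Cl" using Cl_step cx by blast
        then have "y \<in> V'" unfolding V'_def by force
        then show False using h(4) by simp
      qed
    qed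
  qed
  have "good V' A'" unfolding good_def using V'X A'val G1 G2 by blast
  moreover have "V \<subset> V'"
  proof -
    obtain s where s: "s \<in> S" using Sne by blast
    then have "fst s \<in> V'" "fst s \<notin> V" using SCl Sok unfolding V'_def by auto
    then show ?thesis unfolding V'_def by blast
  qed
  moreover have "\<forall>s\<in>S. fst s \<in> V' \<and> A' (fst s) = snd s"
  proof
    fix s assume s: "s \<in> S"
    then have "s \<in> Cl" using SCl by blast
    then show "fst s \<in> V' \<and> A' (fst s) = snd s" using A'Cl[of "fst s" "snd s"] Sok s unfolding V'_def by force
  qed
  ultimately show ?thesis using A'V by blast
qed


lemma exists_pos: "C \<in> Cs \<Longrightarrow> \<exists>s\<in>C \<rightarrow>\<^sub>E {0,1}. p C s > 0"
proof (rule ccontr)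
  assume C: "C \<in> Cs" and "\<not> (\<exists>s\<in>C \<rightarrow>\<^sub>E {0,1}. p C s > 0)"
  then have "\<forall>s\<in>C \<rightarrow>\<^sub>E {0,1}. p C s \<le> 0" by auto
  then have "(\<Sum>s\<in>C \<rightarrow>\<^sub>E {0,1}. p C s) \<le> 0" by (simp add: sum_nonpos)
  then show False using sum1[OF C] by simp
qed

lemma sing_nowalk:
  assumes "{y} \<in> Cs" "c \<le> 1"
  shows "\<not> walk W (y,c) (y,1-c)"
proof
  assume w: "walk W (y,c) (y,1-c)"
  have "c \<noteq> 1 - c" by arith
  then have "imp (y,c) (W!1)" using first_step[OF w] by simp
  then have "{y, fst (W!1)} \<in> Cs" "y \<noteq> fst (W!1)" by (auto simp: imp_def)
  moreover have "{y} \<subset> {y, fst (W!1)}" using calculation by auto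
  ultimately show False using antichain assms(1) by blast
qed

lemma seed_step:
  assumes gd: "good V A" and nw: "\<not> (\<exists>L. witness L)" and y: "y \<in> X" "y \<notin> V"
  shows "\<exists>V' A'. good V' A' \<and> V \<subset> V' \<and> (\<forall>x\<in>V. A' x = A x)"
proof -
  obtain C where C: "C \<in> Cs" "y \<in> C" using cover[OF y(1)] by blast
  obtain s where s: "s \<in> C \<rightarrow>\<^sub>E {0,1}" "p C s > 0" using exists_pos[OF C(1)] by blast
  have sy: "s y \<le> 1" using PiE_mem[OF s(1) C(2)] by auto
  from ctx_shape[OF C(1)] show ?thesis
  proof
    assume "\<exists>x. C = {x}"
    then have Cy: "C = {y}" using C(2) by auto
    have "s = restrict (\<lambda>_. s y) {y}" using s(1) unfolding Cy by (rule PiE_one_eq)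
    then have ps: "p {y} (restrict (\<lambda>_. s y) {y}) > 0" using s(2) Cy by simp
    have nws: "\<forall>W. \<not> walk W (y, s y) (neg (y, s y))"
      using sing_nowalk[of y "s y"] C Cy sy by (simp add: neg_def)
    have h2: "\<forall>s'\<in>{(y, s y)}. snd s' \<le> 1 \<and> fst s' \<in> X \<and> fst s' \<notin> V" using sy y by simp
    have h3: "\<forall>s1\<in>{(y, s y)}. \<forall>s2\<in>{(y, s y)}. \<forall>W. \<not> walk W s1 (neg s2)" using nws by simp
    have h4: "\<forall>s'\<in>{(y, s y)}. {fst s'} \<in> Cs \<longrightarrow> p {fst s'} (restrict (\<lambda>_. snd s') {fst s'}) > 0" using ps by simp
    show ?thesis using extend[OF gd _ h2 h3 h4] by blast
  next
    assume "\<exists>x z. x \<noteq> z \<and> C = {x,z}"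
    then obtain x0 z0 where xz: "x0 \<noteq> z0" "C = {x0,z0}" by blast
    obtain z where z: "z \<noteq> y" "C = {y,z}"
    proof (cases "y = x0")
      case True then show ?thesis using that[of z0] xz by auto
    next
      case False then have "y = z0" using C(2) xz by auto
      then have "C = {y, x0}" using xz by auto
      then show ?thesis using that[of x0] False by auto
    qed
    have sz: "s z \<le> 1" using s(1) z by auto
    have "s = upd2 y (s y) z (s z)" using z(1)[symmetric] s(1)[unfolded z(2)] by (rule PiE_two_eq)
    then have ps: "p {y,z} (upd2 y (s y) z (s z)) > 0" using s(2) z by simp
    have pl: "posl (y, s y)" using posl_pair1[of y z "s y" "s z"] ps z C sy sz by auto
    have nws: "\<forall>W. \<not> walk W (y, s y) (neg (y, s y))"
      using self_walk[OF pl sy] nw by (auto simp: neg_def)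
    have nsing: "{y} \<notin> Cs"
    proof
      assume "{y} \<in> Cs"
      moreover have "{y} \<subset> C" using z by auto
      ultimately show False using antichain C(1) by blast
    qed
    have h2: "\<forall>s'\<in>{(y, s y)}. snd s' \<le> 1 \<and> fst s' \<in> X \<and> fst s' \<notin> V" using sy y by simp
    have h3: "\<forall>s1\<in>{(y, s y)}. \<forall>s2\<in>{(y, s y)}. \<forall>W. \<not> walk W s1 (neg s2)" using nws by simp
    have h4: "\<forall>s'\<in>{(y, s y)}. {fst s'} \<in> Cs \<longrightarrow> p {fst s'} (restrict (\<lambda>_. snd s') {fst s'}) > 0" using nsing by simp
    show ?thesis using extend[OF gd _ h2 h3 h4] by blast
  qed
qed

lemma iterate:
  assumes "good V A" "\<not> (\<exists>L. witness L)"
  shows "\<exists>t\<in>X \<rightarrow>\<^sub>E {0,1}. (\<forall>C\<in>Cs. p C (restrict t C) > 0) \<and> (\<forall>x\<in>V. t x = A x)"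
  using assms
proof (induction "card (X - V)" arbitrary: V A rule: less_induct)
  case less
  have VX: "V \<subseteq> X" and vals: "\<forall>x\<in>V. A x \<le> 1" and g1: "\<forall>C\<in>Cs. C \<subseteq> V \<longrightarrow> p C (restrict A C) > 0"
    using less.prems(1) unfolding good_def by blast+
  show ?case
  proof (cases "V = X")
    case True
    define t where "t = restrict A X"
    have "t \<in> X \<rightarrow>\<^sub>E {0,1}" using vals True by (auto simp: t_def PiE_iff le_Suc_eq)
    moreover have "\<forall>C\<in>Cs. p C (restrict t C) > 0"
    proof
      fix C assume C: "C \<in> Cs"
      have "restrict t C = restrict A C" using ctx_sub[OF C] by (intro ext) (auto simp: t_def restrict_def)
      then show "p C (restrict t C) > 0" using g1 C ctx_sub[OF C] True by auto
    qed
    moreover have "\<forall>x\<in>V. t x = A x" using True by (simp add: t_def)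
    ultimately show ?thesis by blast
  next
    case False
    then obtain y where y: "y \<in> X" "y \<notin> V" using VX by blast
    obtain V' A' where V': "good V' A'" "V \<subset> V'" "\<forall>x\<in>V. A' x = A x"
      using seed_step[OF less.prems y] by blast
    have V'X: "V' \<subseteq> X" using V'(1) unfolding good_def by blast
    have "X - V' \<subset> X - V" using V'(2) V'X by blast
    then have "card (X - V') < card (X - V)" using finX by (meson finite_Diff psubset_card_mono)
    from less.hyps[OF this V'(1) less.prems(2)] obtain t where
      t: "t \<in> X \<rightarrow>\<^sub>E {0,1}" "\<forall>C\<in>Cs. p C (restrict t C) > 0" "\<forall>x\<in>V'. t x = A' x" by blast
    have "\<forall>x\<in>V. t x = A x" using t(3) V'(2,3) by auto
    then show ?thesis using t(1,2) by blast
  qed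
qed

lemma good_empty: "good {} A"
  unfolding good_def using no_empty by auto

lemma initial:
  assumes nw: "\<not> (\<exists>L. witness L)" and C: "C \<in> Cs" and s: "s \<in> C \<rightarrow>\<^sub>E {0,1}" "p C s > 0"
  shows "\<exists>t\<in>X \<rightarrow>\<^sub>E {0,1}. (\<forall>C\<in>Cs. p C (restrict t C) > 0) \<and> restrict t C = s"
proof -
  from ctx_shape[OF C] obtain V' A' where V': "good V' A'" "C \<subseteq> V'" "\<forall>x\<in>C. A' x = s x"
  proof
    assume "\<exists>x. C = {x}"
    then obtain y where Cy: "C = {y}" by blast
    have sy: "s y \<le> 1" using s(1) Cy by auto
    have yX: "y \<in> X" using ctx_sub[OF C] Cy by auto
    have "s = restrict (\<lambda>_. s y) {y}" using s(1) unfolding Cy by (rule PiE_one_eq)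
    then have ps: "p {y} (restrict (\<lambda>_. s y) {y}) > 0" using s(2) Cy by simp
    have "\<forall>W. \<not> walk W (y, s y) (neg (y, s y))"
      using sing_nowalk[of y "s y"] C Cy sy by (simp add: neg_def)
    then have h3: "\<forall>s1\<in>{(y, s y)}. \<forall>s2\<in>{(y, s y)}. \<forall>W. \<not> walk W s1 (neg s2)" by simp
    have h2: "\<forall>s'\<in>{(y, s y)}. snd s' \<le> 1 \<and> fst s' \<in> X \<and> fst s' \<notin> {}" using sy yX by simp
    have h4: "\<forall>s'\<in>{(y, s y)}. {fst s'} \<in> Cs \<longrightarrow> p {fst s'} (restrict (\<lambda>_. snd s') {fst s'}) > 0" using ps by simp
    obtain V' A' where "good V' A'" "\<forall>s'\<in>{(y, s y)}. fst s' \<in> V' \<and> A' (fst s') = snd s'"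
      using extend[OF good_empty _ h2 h3 h4] by blast
    then have "good V' A'" "y \<in> V'" "A' y = s y" by auto
    then show ?thesis using that Cy by auto
  next
    assume "\<exists>x z. x \<noteq> z \<and> C = {x,z}"
    then obtain y z where z: "y \<noteq> z" "C = {y,z}" by blast
    have sy: "s y \<le> 1" "s z \<le> 1" using s(1) z by auto
    have yX: "y \<in> X" "z \<in> X" using ctx_sub[OF C] z by auto
    have "s = upd2 y (s y) z (s z)" using z(1) s(1)[unfolded z(2)] by (rule PiE_two_eq)
    then have ps: "p {y,z} (upd2 y (s y) z (s z)) > 0" using s(2) z by simp
    have ps': "p {z,y} (upd2 z (s z) y (s y)) > 0" using ps z by (simp add: insert_commute upd2_comm)
    have Cyz: "{y,z} \<in> Cs" "{z,y} \<in> Cs" using C z by (auto simp: insert_commute)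
    have ply: "posl (y, s y)" using posl_pair1[OF Cyz(1) z(1) sy ps] .
    have plz: "posl (z, s z)" using posl_pair2[OF Cyz(1) z(1) sy ps] .
    have nsing: "{y} \<notin> Cs" "{z} \<notin> Cs"
      using antichain[OF _ C] z by auto
    define S where "S = {(y, s y), (z, s z)}"
    have nowalk: "\<forall>s1\<in>S. \<forall>s2\<in>S. \<forall>W. \<not> walk W s1 (neg s2)"
    proof (intro ballI allI)
      fix s1 s2 W assume h: "s1 \<in> S" "s2 \<in> S"
      show "\<not> walk W s1 (neg s2)"
      proof
        assume w: "walk W s1 (neg s2)"
        consider "s1 = (y, s y)" "s2 = (y, s y)" | "s1 = (z, s z)" "s2 = (z, s z)"
          | "s1 = (z, s z)" "s2 = (y, s y)" | "s1 = (y, s y)" "s2 = (z, s z)" using h by (auto simp: S_def)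
        then show False
        proof cases
          case 1 then show ?thesis using self_walk[OF ply sy(1)] w nw by (auto simp: neg_def)
        next
          case 2 then show ?thesis using self_walk[OF plz sy(2)] w nw by (auto simp: neg_def)
        next
          case 3 then show ?thesis using bad_witness[OF z(1) Cyz(1) sy ps] w nw by (auto simp: neg_def)
        next
          case 4 then show ?thesis using bad_witness[OF z(1)[symmetric] Cyz(2) sy(2,1) ps'] w nw by (auto simp: neg_def)
        qed
      qed
    qed
    have h2: "\<forall>s'\<in>S. snd s' \<le> 1 \<and> fst s' \<in> X \<and> fst s' \<notin> {}" using sy yX by (simp add: S_def)
    have h4: "\<forall>s'\<in>S. {fst s'} \<in> Cs \<longrightarrow> p {fst s'} (restrict (\<lambda>_. snd s') {fst s'}) > 0" using nsing by (simp add: S_def)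
    have h1: "S \<noteq> {}" by (simp add: S_def)
    obtain V' A' where "good V' A'" "\<forall>s\<in>S. fst s \<in> V' \<and> A' (fst s) = snd s"
      using extend[OF good_empty h1 h2 nowalk h4] by blast
    then show ?thesis using that z unfolding S_def by auto
  qed
  obtain t where t: "t \<in> X \<rightarrow>\<^sub>E {0,1}" "\<forall>C\<in>Cs. p C (restrict t C) > 0" "\<forall>x\<in>V'. t x = A' x"
    using iterate[OF V'(1) nw] by blast
  have "restrict t C = s"
  proof
    fix x show "restrict t C x = s x"
      using s(1) V' t(3) by (cases "x \<in> C") (auto simp: PiE_iff extensional_def)
  qed
  then show ?thesis using t by blast
qed


lemma ext_exists:
  assumes C: "C \<in> Cs" and s: "s \<in> C \<rightarrow>\<^sub>E {0,1}"
  shows "\<exists>t\<in>X \<rightarrow>\<^sub>E {0,1}. restrict t C = s"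
proof -
  define t where "t = (\<lambda>x. if x \<in> C then s x else if x \<in> X then 0 else undefined)"
  have CX: "C \<subseteq> X" using ctx_sub[OF C] .
  have "t \<in> X \<rightarrow>\<^sub>E {0,1}" using s CX by (auto simp: t_def PiE_iff extensional_def)
  moreover have "restrict t C = s"
  proof
    fix x show "restrict t C x = s x" using s by (auto simp: t_def PiE_iff extensional_def)
  qed
  ultimately show ?thesis by blast
qed

lemma restrict_PiE_sub: "t \<in> X \<rightarrow>\<^sub>E B \<Longrightarrow> C \<subseteq> X \<Longrightarrow> restrict t C \<in> C \<rightarrow>\<^sub>E B"
  by (auto simp: PiE_iff)

lemma noncontextual:
  assumes nw: "\<not> (\<exists>L. witness L)"
  shows "logically_noncontextual X Cs {0,1} p"
proof -
  define good_t where "good_t = (\<lambda>t. t \<in> X \<rightarrow>\<^sub>E {0::nat,1} \<and> (\<forall>C\<in>Cs. p C (restrict t C) > 0))"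
  define pb where "pb = (\<lambda>t. if good_t t then 1 else (0::nat))"
  have P1: "\<forall>t\<in>X \<rightarrow>\<^sub>E {0,1}. pb t \<in> {0,1}" by (simp add: pb_def)
  have P2: "Max {pb t | t. t \<in> X \<rightarrow>\<^sub>E {0,1} \<and> restrict t C = s} = (if p C s > 0 then 1 else 0)"
    if C: "C \<in> Cs" and s: "s \<in> C \<rightarrow>\<^sub>E {0::nat,1}" for C s
  proof -
    define M where "M = {pb t | t. t \<in> X \<rightarrow>\<^sub>E {0,1} \<and> restrict t C = s}"
    have Msub: "M \<subseteq> {0,1}"
    proof
      fix x assume "x \<in> M"
      then obtain t where "x = pb t" unfolding M_def by blast
      then show "x \<in> {0,1}" by (simp add: pb_def)
    qed
    then have finM: "finite M" by (rule finite_subset) simp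
    obtain t0 where t0: "t0 \<in> X \<rightarrow>\<^sub>E {0,1}" "restrict t0 C = s" using ext_exists[OF C s] by blast
    have "pb t0 \<in> M" unfolding M_def using t0 by blast
    then have Mne: "M \<noteq> {}" by auto
    have "Max M = (if p C s > 0 then 1 else 0)"
    proof (cases "p C s > 0")
      case True
      obtain t where t: "t \<in> X \<rightarrow>\<^sub>E {0,1}" "\<forall>C\<in>Cs. p C (restrict t C) > 0" "restrict t C = s"
        using initial[OF nw C s True] by blast
      have "good_t t" unfolding good_t_def using t(1,2) by blast
      then have "pb t = 1" by (simp add: pb_def)
      moreover have "pb t \<in> M" unfolding M_def using t(1,3) by blast
      ultimately have "1 \<in> M" by simp
      have "Max M \<in> M" using finM Mne by (rule Max_in)
      then have "Max M \<le> 1" using Msub by auto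
      moreover have "1 \<le> Max M" using Max_ge[OF finM \<open>1 \<in> M\<close>] .
      ultimately have "Max M = 1" by simp
      then show ?thesis using True by simp
    next
      case False
      have "\<forall>x\<in>M. x = 0"
      proof
        fix x assume "x \<in> M"
        then obtain t where t: "x = pb t" "restrict t C = s" unfolding M_def by blast
        have "\<not> good_t t"
        proof
          assume "good_t t"
          then have "p C (restrict t C) > 0" using C unfolding good_t_def by blast
          then show False using False t(2) by simp
        qed
        then show "x = 0" using t(1) by (simp add: pb_def)
      qed
      then have "M = {0}" using Mne by auto
      then show ?thesis using False by simp
    qed
    then show ?thesis unfolding M_def .
  qed
  have "(\<forall>t\<in>X \<rightarrow>\<^sub>E {0,1}. pb t \<in> {0,1}) \<and>
      (\<forall>C\<in>Cs. \<forall>s\<in>C \<rightarrow>\<^sub>E {0,1}.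
          Max {pb t | t. t \<in> X \<rightarrow>\<^sub>E {0,1} \<and> restrict t C = s} = (if p C s > 0 then 1 else 0))"
    by (intro conjI ballI P2 P1[rule_format])
  then show ?thesis unfolding logically_noncontextual_def by (rule exI[where x = pb])
qed

lemma converse:
  assumes "\<exists>N i a b \<alpha>. is_cycle Cs N \<and> i < length N \<and> a \<in> {0, 1} \<and> b \<in> {0, 1} \<and>
       (\<forall>j\<in>{1..length N - 2}. \<alpha> j \<in> {0, 1}) \<and>
       edge_prob p N i a b > 0 \<and>
       edge_prob p N (i + 1) b (\<alpha> 1) = 0 \<and>
       (\<forall>j\<in>{2..length N - 2}. edge_prob p N (i + j) (1 - \<alpha> (j - 1)) (\<alpha> j) = 0) \<and>
       edge_prob p N (i + length N - 1) (1 - \<alpha> (length N - 2)) a = 0"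
  shows "\<not> logically_noncontextual X Cs {0,1} p"
proof
  assume "logically_noncontextual X Cs {0,1} p"
  then obtain pb :: "('x \<Rightarrow> nat) \<Rightarrow> nat" where pb01: "\<forall>t\<in>X \<rightarrow>\<^sub>E {0,1}. pb t \<in> {0,1}"
    and pbM: "\<forall>C\<in>Cs. \<forall>s\<in>C \<rightarrow>\<^sub>E {0,1}. Max {pb t | t. t \<in> X \<rightarrow>\<^sub>E {0,1} \<and> restrict t C = s} = (if p C s > 0 then 1 else 0)"
    unfolding logically_noncontextual_def by blast
  from assms obtain N i a b \<alpha> where cy: "is_cycle Cs N" and i: "i < length N" and ab: "a \<in> {0,1}" "b \<in> {0,1}"
    and \<alpha>01: "\<forall>j\<in>{1..length N - 2}. \<alpha> j \<in> {0, 1}"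
    and E0: "edge_prob p N i a b > 0" and E1: "edge_prob p N (i + 1) b (\<alpha> 1) = 0"
    and E2: "\<forall>j\<in>{2..length N - 2}. edge_prob p N (i + j) (1 - \<alpha> (j - 1)) (\<alpha> j) = 0"
    and E3: "edge_prob p N (i + length N - 1) (1 - \<alpha> (length N - 2)) a = 0" by blast
  define m where "m = length N"
  have m3: "m \<ge> 3" and dist: "distinct N" and edges0: "\<forall>r<m. {N ! r, N ! ((r + 1) mod m)} \<in> Cs"
    using cy by (auto simp: is_cycle_def m_def)
  have edges: "{N!(r mod m), N!(Suc r mod m)} \<in> Cs" for r
    using edges0[rule_format, of "r mod m"] m3 by (simp add: mod_Suc_eq)
  have neq: "N!(r mod m) \<noteq> N!(Suc r mod m)" for r
  proof -
    have "r mod m \<noteq> Suc r mod m"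
    proof (cases "Suc (r mod m) = m")
      case True then show ?thesis using m3 by (simp add: mod_Suc)
    next
      case False then show ?thesis by (simp add: mod_Suc)
    qed
    moreover have "r mod m < m" "Suc r mod m < m" using m3 by auto
    ultimately show ?thesis using dist by (simp add: nth_eq_iff_index_eq m_def)
  qed
  have inX: "N!(r mod m) \<in> X" for r using ctx_sub[OF edges[of r]] by auto
  define C0 where "C0 = {N!i, N!(Suc i mod m)}"
  define s0 where "s0 = upd2 (N!i) a (N!(Suc i mod m)) b"
  have imod: "i mod m = i" using i by (simp add: m_def)
  have C0: "C0 \<in> Cs" using edges[of i] imod by (simp add: C0_def)
  have s0: "s0 \<in> C0 \<rightarrow>\<^sub>E {0,1}" unfolding s0_def C0_def using ab by (intro upd2_PiE) auto
  have ps0: "p C0 s0 > 0" using E0 imod by (simp add: edge_prob_eq C0_def s0_def m_def)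
  define M where "M = {pb t | t. t \<in> X \<rightarrow>\<^sub>E {0,1} \<and> restrict t C0 = s0}"
  have "Max M = 1" using pbM C0 s0 ps0 by (simp add: M_def)
  moreover have finM: "finite M"
  proof -
    have "M \<subseteq> pb ` (X \<rightarrow>\<^sub>E {0,1})" by (auto simp: M_def)
    then show ?thesis using finite_PiE[OF finX, of "\<lambda>_. {0::nat,1}"] finite_subset by blast
  qed
  moreover have "M \<noteq> {}" using ext_exists[OF C0 s0] by (auto simp: M_def)
  ultimately have "1 \<in> M" using Max_in by metis
  then obtain t where t: "t \<in> X \<rightarrow>\<^sub>E {0,1}" "restrict t C0 = s0" "pb t = 1" by (auto simp: M_def)
  have cons: "p C (restrict t C) > 0" if C: "C \<in> Cs" for C
  proof -
    define M' where "M' = {pb t' | t'. t' \<in> X \<rightarrow>\<^sub>E {0,1} \<and> restrict t' C = restrict t C}"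
    have rt: "restrict t C \<in> C \<rightarrow>\<^sub>E {0,1}" using restrict_PiE_sub[OF t(1) ctx_sub[OF C]] .
    have "pb t \<in> M'" unfolding M'_def using t(1) by blast
    then have "1 \<in> M'" using t(3) by simp
    moreover have "finite M'"
    proof -
      have "M' \<subseteq> pb ` (X \<rightarrow>\<^sub>E {0,1})" by (auto simp: M'_def)
      then show ?thesis using finite_PiE[OF finX, of "\<lambda>_. {0::nat,1}"] finite_subset by blast
    qed
    ultimately have "Max M' \<ge> 1" by (simp add: Max_ge)
    moreover have "Max M' = (if p C (restrict t C) > 0 then 1 else 0)" using pbM C rt by (simp add: M'_def)
    ultimately show ?thesis by (cases "p C (restrict t C) > 0") auto
  qed
  have tval: "t (N!(r mod m)) \<in> {0,1}" for r using t(1) inX[of r] by auto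
  have Z: "t (N!(Suc r mod m)) \<noteq> y" if "edge_prob p N r x y = 0" "t (N!(r mod m)) = x" for r x y
  proof
    assume ty: "t (N!(Suc r mod m)) = y"
    have "restrict t {N!(r mod m), N!(Suc r mod m)} = upd2 (N!(r mod m)) x (N!(Suc r mod m)) y"
      using restrict_two[OF neq[of r], of t] that(2) ty by simp
    then have "p {N!(r mod m), N!(Suc r mod m)} (upd2 (N!(r mod m)) x (N!(Suc r mod m)) y) > 0"
      using cons[OF edges[of r]] by simp
    then show False using that(1) by (simp add: edge_prob_eq m_def)
  qed
  have ta: "t (N!i) = a" and tb: "t (N!(Suc i mod m)) = b"
    using fun_cong[OF t(2), of "N!i"] fun_cong[OF t(2), of "N!(Suc i mod m)"] neq[of i] imod
    by (auto simp: C0_def s0_def)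
  have flip: "t v = 1 - c" if "t v \<noteq> c" "t v \<in> {0,1}" "c \<in> {0,1}" for v c
    using that by auto
  have claim: "1 \<le> j \<Longrightarrow> j \<le> m - 2 \<Longrightarrow> t (N!(Suc (i + j) mod m)) = 1 - \<alpha> j" for j
  proof (induction j)
    case 0 then show ?case by simp
  next
    case (Suc j)
    show ?case
    proof (cases "j = 0")
      case True
      have "t (N!(Suc (Suc i) mod m)) \<noteq> \<alpha> 1" using Z[of "Suc i" b "\<alpha> 1"] E1 tb by simp
      moreover have "\<alpha> 1 \<in> {0,1}" using \<alpha>01 m3 by (auto simp: m_def)
      ultimately show ?thesis using True flip tval[of "Suc (Suc i)"] by simp
    next
      case False
      then have IH: "t (N!(Suc (i + j) mod m)) = 1 - \<alpha> j" using Suc by simp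
      have sj: "Suc j \<in> {2..length N - 2}" using False Suc.prems by (auto simp: m_def)
      have "edge_prob p N (Suc (i + j)) (1 - \<alpha> j) (\<alpha> (Suc j)) = 0" using bspec[OF E2 sj] by simp
      then have "t (N!(Suc (Suc (i + j)) mod m)) \<noteq> \<alpha> (Suc j)" using Z IH by blast
      moreover have "\<alpha> (Suc j) \<in> {0,1}" using \<alpha>01 Suc.prems by (auto simp: m_def)
      ultimately show ?thesis using flip tval[of "Suc (Suc (i + j))"] by simp
    qed
  qed
  have c: "t (N!(Suc (i + (m - 2)) mod m)) = 1 - \<alpha> (m - 2)" by (rule claim) (use m3 in auto)
  have eq: "Suc (i + (m - 2)) = i + m - 1" using m3 by simp
  from c have "t (N!((i + m - 1) mod m)) = 1 - \<alpha> (m - 2)" by (simp only: eq)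
  then have "t (N!(Suc (i + m - 1) mod m)) \<noteq> a" using Z E3 by (simp add: m_def)
  moreover have "Suc (i + m - 1) mod m = i" using m3 imod by simp
  ultimately show False using ta by simp
qed

lemma main:
  "logically_contextual X Cs {0, 1} p \<longleftrightarrow>
    (\<exists>N i a b \<alpha>. is_cycle Cs N \<and> i < length N \<and> a \<in> {0, 1} \<and> b \<in> {0, 1} \<and>
       (\<forall>j\<in>{1..length N - 2}. \<alpha> j \<in> {0, 1}) \<and>
       edge_prob p N i a b > 0 \<and>
       edge_prob p N (i + 1) b (\<alpha> 1) = 0 \<and>
       (\<forall>j\<in>{2..length N - 2}. edge_prob p N (i + j) (1 - \<alpha> (j - 1)) (\<alpha> j) = 0) \<and>
       edge_prob p N (i + length N - 1) (1 - \<alpha> (length N - 2)) a = 0)"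
  unfolding logically_contextual_def
proof
  assume "\<not> logically_noncontextual X Cs {0, 1} p"
  then obtain L where "witness L" using noncontextual by blast
  then show "\<exists>N i a b \<alpha>. is_cycle Cs N \<and> i < length N \<and> a \<in> {0, 1} \<and> b \<in> {0, 1} \<and>
       (\<forall>j\<in>{1..length N - 2}. \<alpha> j \<in> {0, 1}) \<and>
       edge_prob p N i a b > 0 \<and>
       edge_prob p N (i + 1) b (\<alpha> 1) = 0 \<and>
       (\<forall>j\<in>{2..length N - 2}. edge_prob p N (i + j) (1 - \<alpha> (j - 1)) (\<alpha> j) = 0) \<and>
       edge_prob p N (i + length N - 1) (1 - \<alpha> (length N - 2)) a = 0" by (rule witness_rhs)
next
  assume "\<exists>N i a b \<alpha>. is_cycle Cs N \<and> i < length N \<and> a \<in> {0, 1} \<and> b \<in> {0, 1} \<and>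
       (\<forall>j\<in>{1..length N - 2}. \<alpha> j \<in> {0, 1}) \<and>
       edge_prob p N i a b > 0 \<and>
       edge_prob p N (i + 1) b (\<alpha> 1) = 0 \<and>
       (\<forall>j\<in>{2..length N - 2}. edge_prob p N (i + j) (1 - \<alpha> (j - 1)) (\<alpha> j) = 0) \<and>
       edge_prob p N (i + length N - 1) (1 - \<alpha> (length N - 2)) a = 0"
  then show "\<not> logically_noncontextual X Cs {0, 1} p" by (rule converse)
qed

end

theorem theorem3:
  fixes X :: "'x set" and Cs :: "'x set set"
    and p :: "'x set \<Rightarrow> ('x \<Rightarrow> nat) \<Rightarrow> real"
  assumes "compat_scenario X Cs {0, 1}"
    and "simple_scenario Cs"
    and "\<exists>N. is_cycle Cs N"
    and "behavior Cs {0, 1} p"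
    and "nondisturbing Cs {0, 1} p"
  shows "logically_contextual X Cs {0, 1} p \<longleftrightarrow>
    (\<exists>N i a b \<alpha>. is_cycle Cs N \<and> i < length N \<and> a \<in> {0, 1} \<and> b \<in> {0, 1} \<and>
       (\<forall>j\<in>{1..length N - 2}. \<alpha> j \<in> {0, 1}) \<and>
       edge_prob p N i a b > 0 \<and>
       edge_prob p N (i + 1) b (\<alpha> 1) = 0 \<and>
       (\<forall>j\<in>{2..length N - 2}. edge_prob p N (i + j) (1 - \<alpha> (j - 1)) (\<alpha> j) = 0) \<and>
       edge_prob p N (i + length N - 1) (1 - \<alpha> (length N - 2)) a = 0)"
  using sc.main[OF sc.intro[OF assms]] .

end
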